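(* Let $z_1,z_2\in W^+(\Omega)$ and let $Q$ be an open subset of $\Omega$ with $\overline{Q}\subset\Omega$, $z_1<z_2$ in $Q$ and $z_1=z_2$ on $\partial Q$. Assume that for every $\boldsymbol{x}_Q\in\partial\overline{Q}$ there is $r>0$ with $\overline{B_r(\boldsymbol{x}_Q)}\subset\Omega$ and $z_1\ge z_2$ in $B_r(\boldsymbol{x}_Q)\setminus\overline{Q}$. If there exists $\boldsymbol{x}_0\in\partial\overline{Q}$ such that $z_2$ is differentiable at $\boldsymbol{x}_0$ and $\nabla z_2(\boldsymbol{x}_0)\notin\partial z_1(\boldsymbol{x}_0)$, then $$\int_{\partial z_1(\overline{Q})}R(\boldsymbol{p})\,d\boldsymbol{p}\ >\ \int_{\partial z_2(\overline{Q})}R(\boldsymbol{p})\,d\boldsymbol{p}.$$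
   Context: $\Omega\subset\mathbb{R}^d$ is a bounded open convex domain and $W^+(\Omega)$ denotes the set of convex real-valued functions on $\Omega$. $R:\mathbb{R}^d\to(0,\infty)$ is locally integrable with $R>0$ everywhere. For $u\in W^+(\Omega)$ and $\boldsymbol{x}\in\Omega$, $\partial u(\boldsymbol{x})=\{\boldsymbol{p}\in\mathbb{R}^d:\ u(\boldsymbol{y})\ge u(\boldsymbol{x})+\boldsymbol{p}\cdot(\boldsymbol{y}-\boldsymbol{x})\ \forall \boldsymbol{y}\in \Omega\}$ and $\partial u(E)=\bigcup_{\boldsymbol{x}\in E}\partial u(\boldsymbol{x})$. $\partial\overline Q$ denotes the topological boundary of $\overline Q$; $B_r(\boldsymbol{x})$ is the open ball of radius $r$ centered at $\boldsymbol{x}$. *)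

theory Defs
  imports "HOL-Analysis.Analysis"
begin

definition subdiff :: "'a::euclidean_space set \<Rightarrow> ('a \<Rightarrow> real) \<Rightarrow> 'a \<Rightarrow> 'a set" where
  "subdiff \<Omega> u x = {p. \<forall>y\<in>\<Omega>. u y \<ge> u x + p \<bullet> (y - x)}"

definition subdiff_set :: "'a::euclidean_space set \<Rightarrow> ('a \<Rightarrow> real) \<Rightarrow> 'a set \<Rightarrow> 'a set" where
  "subdiff_set \<Omega> u E = (\<Union>x\<in>E. subdiff \<Omega> u x)"

definition locally_integrable :: "('a::euclidean_space \<Rightarrow> real) \<Rightarrow> bool" where
  "locally_integrable R \<longleftrightarrow> (\<forall>K. compact K \<longrightarrow> R integrable_on K)"

end

theory Submission
  imports Defs
begin


lemma ray_deriv: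
  fixes f :: "'a::euclidean_space \<Rightarrow> real"
  assumes "(f has_derivative (\<lambda>h. g \<bullet> h)) (at x)"
  shows "((\<lambda>s. (f (x + s *\<^sub>R v) - f x) / s) \<longlongrightarrow> g \<bullet> v) (at_right 0)"
proof -
  have d1: "((\<lambda>s::real. x + s *\<^sub>R v) has_derivative (\<lambda>s. s *\<^sub>R v)) (at 0)"
    by (auto intro!: derivative_eq_intros)
  have "(f has_derivative (\<lambda>h. g \<bullet> h)) (at (x + 0 *\<^sub>R v))" using assms by simp
  from has_derivative_compose[OF d1 this]
  have "((\<lambda>s. f (x + s *\<^sub>R v)) has_derivative (\<lambda>s. g \<bullet> (s *\<^sub>R v))) (at 0)" .
  moreover have "(\<lambda>s. g \<bullet> (s *\<^sub>R v)) = (*) (g \<bullet> v)" by (auto simp: algebra_simps)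
  ultimately have "((\<lambda>s. f (x + s *\<^sub>R v)) has_field_derivative (g \<bullet> v)) (at 0)"
    by (simp add: has_field_derivative_def)
  then have "((\<lambda>s. (f (x + s *\<^sub>R v) - f (x + 0 *\<^sub>R v)) / (s - 0)) \<longlongrightarrow> g \<bullet> v) (at 0)"
    by (simp add: has_field_derivative_iff)
  then show ?thesis
    using tendsto_mono[OF at_le[OF subset_UNIV]] by simp
qed

lemma tangent_subdiff:
  fixes f :: "'a::euclidean_space \<Rightarrow> real"
  assumes cf: "convex_on S f" and cS: "convex S" and x: "x \<in> S"
    and d: "(f has_derivative (\<lambda>h. g \<bullet> h)) (at x)"
  shows "g \<in> subdiff S f x"
  unfolding subdiff_def
proof (clarify)
  fix y assume y: "y \<in> S"
  have lim: "((\<lambda>s. (f (x + s *\<^sub>R (y - x)) - f x) / s) \<longlongrightarrow> g \<bullet> (y - x)) (at_right 0)"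
    by (rule ray_deriv[OF d])
  have ev: "eventually (\<lambda>s. (f (x + s *\<^sub>R (y - x)) - f x) / s \<le> f y - f x) (at_right (0::real))"
    using eventually_at_right_real[OF zero_less_one]
  proof (rule eventually_mono)
    fix s :: real assume s: "s \<in> {0<..<1}"
    have "f ((1 - s) *\<^sub>R x + s *\<^sub>R y) \<le> (1 - s) * f x + s * f y"
      using s by (intro convex_onD[OF cf]) (use x y in auto)
    moreover have "(1 - s) *\<^sub>R x + s *\<^sub>R y = x + s *\<^sub>R (y - x)" by (simp add: algebra_simps)
    ultimately have "f (x + s *\<^sub>R (y - x)) - f x \<le> s * (f y - f x)" by (simp add: algebra_simps)
    then show "(f (x + s *\<^sub>R (y - x)) - f x) / s \<le> f y - f x"
      using s by (simp add: divide_le_eq mult.commute)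
  qed
  have "g \<bullet> (y - x) \<le> f y - f x"
    by (rule tendsto_le[OF _ tendsto_const lim ev]) simp
  then show "f x + g \<bullet> (y - x) \<le> f y" by simp
qed

lemma deriv_contra:
  fixes f :: "'a::euclidean_space \<Rightarrow> real"
  assumes d: "(f has_derivative (\<lambda>h. g \<bullet> h)) (at x)" and S: "open S" "x \<in> S"
    and c: "c > 0" and v: "v \<noteq> 0"
    and ineq: "\<And>y. y \<in> S \<Longrightarrow> f y - f x - g \<bullet> (y - x) \<ge> c * (v \<bullet> (y - x))"
  shows False
proof -
  have lim: "((\<lambda>s. (f (x + s *\<^sub>R v) - f x) / s) \<longlongrightarrow> g \<bullet> v) (at_right 0)"
    by (rule ray_deriv[OF d])
  obtain e where e: "e > 0" "ball x e \<subseteq> S" using S open_contains_ball by blast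
  have nv: "norm v > 0" using v by simp
  have pos: "0 < e / norm v" using e nv by simp
  have ev: "eventually (\<lambda>s. g \<bullet> v + c * (v \<bullet> v) \<le> (f (x + s *\<^sub>R v) - f x) / s) (at_right (0::real))"
    using eventually_at_right_real[OF pos]
  proof (rule eventually_mono)
    fix s :: real assume s: "s \<in> {0<..<e / norm v}"
    have "norm (s *\<^sub>R v) < e" using s nv by (simp add: pos_less_divide_eq)
    then have "x + s *\<^sub>R v \<in> S" using e by (auto simp: dist_norm)
    from ineq[OF this] have "s * (g \<bullet> v + c * (v \<bullet> v)) \<le> f (x + s *\<^sub>R v) - f x"
      by (simp add: algebra_simps)
    then show "g \<bullet> v + c * (v \<bullet> v) \<le> (f (x + s *\<^sub>R v) - f x) / s"
      using s by (simp add: le_divide_eq mult.commute)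
  qed
  have "g \<bullet> v + c * (v \<bullet> v) \<le> g \<bullet> v"
    by (rule tendsto_le[OF _ lim tendsto_const ev]) simp
  moreover have "v \<bullet> v > 0" using v by simp
  ultimately show False using c by (smt (verit) mult_pos_pos)
qed


lemma localmin_subdiff:
  fixes f :: "'a::euclidean_space \<Rightarrow> real"
  assumes cf: "convex_on S f" and cS: "convex S" and x: "x \<in> S" and e: "e > 0"
    and loc: "\<And>y. y \<in> S \<Longrightarrow> dist y x < e \<Longrightarrow> f x + p \<bullet> (y - x) \<le> f y"
  shows "p \<in> subdiff S f x"
  unfolding subdiff_def
proof (clarify)
  fix y assume y: "y \<in> S"
  show "f x + p \<bullet> (y - x) \<le> f y"
  proof (cases "y = x")
    case True then show ?thesis by simp
  next
    case False
    then have ny: "norm (y - x) > 0" by simp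
    define u where "u = min 1 (e / (2 * norm (y - x)))"
    have u: "0 < u" "u \<le> 1" using e ny by (auto simp: u_def)
    define z where "z = (1 - u) *\<^sub>R x + u *\<^sub>R y"
    have zS: "z \<in> S" using cS x y u unfolding z_def by (simp add: convex_def)
    have "z - x = u *\<^sub>R (y - x)" by (simp add: z_def algebra_simps)
    then have "dist z x = u * norm (y - x)" using u by (simp add: dist_norm)
    also have "\<dots> \<le> e / (2 * norm (y - x)) * norm (y - x)"
      using ny by (intro mult_right_mono) (auto simp: u_def)
    also have "\<dots> = e / 2" using ny by simp
    finally have "dist z x < e" using e by simp
    from loc[OF zS this] have "f x + p \<bullet> (z - x) \<le> f z" .
    moreover have "f z \<le> (1 - u) * f x + u * f y"
      unfolding z_def using u by (intro convex_onD[OF cf]) (use x y in auto)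
    moreover have "p \<bullet> (z - x) = u * (p \<bullet> (y - x))" using \<open>z - x = _\<close> by simp
    ultimately have "u * (f x + p \<bullet> (y - x)) \<le> u * f y" by (simp add: algebra_simps)
    then show ?thesis using u by simp
  qed
qed


lemma subdiff_nonempty:
  fixes f :: "'a::euclidean_space \<Rightarrow> real"
  assumes cf: "convex_on S f" and cS: "convex S" and oS: "open S" and x: "x \<in> S"
  shows "\<exists>q. q \<in> subdiff S f x"
proof -
  define E where "E = {(y - x, s - f x) | y s. y \<in> S \<and> f y < s}"
  have cE: "convex E"
    unfolding convex_def
  proof (clarify)
    fix u v :: real and a b
    assume "a \<in> E" "b \<in> E" "0 \<le> u" "0 \<le> v" "u + v = 1"
    then obtain y1 s1 y2 s2 where 1: "a = (y1 - x, s1 - f x)" "y1 \<in> S" "f y1 < s1"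
      and 2: "b = (y2 - x, s2 - f x)" "y2 \<in> S" "f y2 < s2" unfolding E_def mem_Collect_eq by metis
    have yS: "u *\<^sub>R y1 + v *\<^sub>R y2 \<in> S" 
      by (rule convexD[OF cS 1(2) 2(2) \<open>0 \<le> u\<close> \<open>0 \<le> v\<close> \<open>u + v = 1\<close>])
    have lt: "u * f y1 + v * f y2 < u * s1 + v * s2"
    proof (cases "u = 0")
      case True then show ?thesis using \<open>u + v = 1\<close> 2 by simp
    next
      case False then have "u > 0" using \<open>0 \<le> u\<close> by simp
      then have "u * f y1 < u * s1" using 1 by simp
      moreover have "v * f y2 \<le> v * s2" using 2 \<open>0 \<le> v\<close> by (simp add: mult_left_mono)
      ultimately show ?thesis by simp
    qed
    have uv: "u = 1 - v" using \<open>u + v = 1\<close> by simp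
    have "f (u *\<^sub>R y1 + v *\<^sub>R y2) \<le> u * f y1 + v * f y2"
      unfolding uv using \<open>0 \<le> u\<close> \<open>0 \<le> v\<close> \<open>u + v = 1\<close> 1 2
      by (intro convex_onD[OF cf]) auto
    with lt have lt2: "f (u *\<^sub>R y1 + v *\<^sub>R y2) < u * s1 + v * s2" by simp
    have "u *\<^sub>R a + v *\<^sub>R b = ((u *\<^sub>R y1 + v *\<^sub>R y2) - x, (u * s1 + v * s2) - f x)"
    proof -
      have "u *\<^sub>R (y1 - x) + v *\<^sub>R (y2 - x) = (u *\<^sub>R y1 + v *\<^sub>R y2) - (u + v) *\<^sub>R x"
        by (simp add: algebra_simps)
      moreover have "u * (s1 - f x) + v * (s2 - f x) = (u * s1 + v * s2) - (u + v) * f x"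
        by (simp add: algebra_simps)
      ultimately show ?thesis using 1 2 \<open>u + v = 1\<close> by simp
    qed
    have "((u *\<^sub>R y1 + v *\<^sub>R y2) - x, (u * s1 + v * s2) - f x) \<in> E"
      unfolding E_def mem_Collect_eq
      by (rule exI[where x="u *\<^sub>R y1 + v *\<^sub>R y2"], rule exI[where x="u * s1 + v * s2"]) (use yS lt2 in simp)
    then show "u *\<^sub>R a + v *\<^sub>R b \<in> E" using \<open>u *\<^sub>R a + v *\<^sub>R b = _\<close> by simp
  qed
  have "0 \<notin> E" unfolding E_def by (auto simp: zero_prod_def)
  from separating_hyperplane_set_0[OF cE this] obtain a where a: "a \<noteq> 0" "\<forall>z\<in>E. 0 \<le> a \<bullet> z"
    by blast
  obtain a1 a2 where a12: "a = (a1, a2)" by (cases a)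
  have key: "0 \<le> a1 \<bullet> (y - x) + a2 * (s - f x)" if "y \<in> S" "f y < s" for y s
  proof -
    have "(y - x, s - f x) \<in> E" unfolding E_def using that by blast
    then show ?thesis using a a12 by (auto simp: inner_Pair)
  qed
  have "0 \<le> a2" using key[OF x, of "f x + 1"] by simp
  moreover have "a2 \<noteq> 0"
  proof
    assume a20: "a2 = 0"
    then have a1: "a1 \<noteq> 0" using a a12 by (auto simp: zero_prod_def)
    obtain e where e: "e > 0" "ball x e \<subseteq> S" using oS x open_contains_ball by blast
    define y where "y = x - (e / (2 * norm a1)) *\<^sub>R a1"
    have "dist x y < e" using e a1 by (simp add: y_def dist_norm)
    then have "y \<in> S" using e by auto
    from key[OF this, of "f y + 1"] a20 have "0 \<le> a1 \<bullet> (y - x)" by simp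
    moreover have "a1 \<bullet> (y - x) = - (e / (2 * norm a1)) * (a1 \<bullet> a1)" by (simp add: y_def)
    moreover have "a1 \<bullet> a1 > 0" using a1 by simp
    moreover have "0 < e * (a1 \<bullet> a1) / (2 * norm a1)" using e a1 \<open>a1 \<bullet> a1 > 0\<close> by simp
    ultimately show False by simp
  qed
  ultimately have a2p: "a2 > 0" by simp
  show ?thesis
  proof (intro exI, unfold subdiff_def, clarify)
    fix y assume y: "y \<in> S"
    show "f x + (- (1 / a2)) *\<^sub>R a1 \<bullet> (y - x) \<le> f y"
    proof (rule ccontr)
      assume "\<not> ?thesis"
      then have t: "a1 \<bullet> (y - x) + a2 * (f y - f x) < 0"
        using a2p by (simp add: field_simps)
      define t where "t = a1 \<bullet> (y - x) + a2 * (f y - f x)"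
      have "f y < f y - t / (2 * a2)" using t a2p by (simp add: t_def field_simps)
      have eq: "a2 * (f y - t / (2 * a2) - f x) = a2 * (f y - f x) - t / 2"
        using a2p by (simp add: right_diff_distrib)
      have "0 \<le> a1 \<bullet> (y - x) + a2 * (f y - t / (2 * a2) - f x)" by (rule key[OF y \<open>f y < _\<close>])
      then have "0 \<le> a1 \<bullet> (y - x) + (a2 * (f y - f x) - t / 2)" by (simp only: eq)
      then have "0 \<le> t - t / 2" unfolding t_def by linarith
      then show False using t by (simp add: t_def)
    qed
  qed
qed




lemma subdiff_set_closed:
  fixes f :: "'a::euclidean_space \<Rightarrow> real"
  assumes K: "compact K" "K \<subseteq> S" and oS: "open S" and cont: "continuous_on S f"
  shows "closed (subdiff_set S f K)"
  unfolding closed_sequential_limits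
proof (clarify)
  fix P :: "nat \<Rightarrow> 'a" and p
  assume P: "\<forall>n. P n \<in> subdiff_set S f K" and Pl: "P \<longlonglongrightarrow> p"
  have "\<forall>n. \<exists>x. x \<in> K \<and> P n \<in> subdiff S f x" using P unfolding subdiff_set_def by blast
  then obtain X where X: "\<And>n. X n \<in> K" "\<And>n. P n \<in> subdiff S f (X n)" by metis
  obtain l r where l: "l \<in> K" "strict_mono (r :: nat \<Rightarrow> nat)" "(X \<circ> r) \<longlonglongrightarrow> l"
    using seq_compactE[OF compact_imp_seq_compact[OF K(1)], of X] X(1) by blast
  have lS: "l \<in> S" using l K by auto
  have ic: "isCont f l" using cont oS lS by (simp add: continuous_on_eq_continuous_at)
  have Pr: "(P \<circ> r) \<longlonglongrightarrow> p" using LIMSEQ_subseq_LIMSEQ[OF Pl l(2)] .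
  have "p \<in> subdiff S f l"
    unfolding subdiff_def
  proof (clarify)
    fix y assume y: "y \<in> S"
    have lim: "(\<lambda>n. f (X (r n)) + P (r n) \<bullet> (y - X (r n))) \<longlonglongrightarrow> f l + p \<bullet> (y - l)"
      using l(3) Pr ic
      by (auto intro!: tendsto_intros isCont_tendsto_compose[OF ic] simp: o_def)
    have "\<forall>n. f (X (r n)) + P (r n) \<bullet> (y - X (r n)) \<le> f y"
      using X(2) y unfolding subdiff_def by blast
    then show "f l + p \<bullet> (y - l) \<le> f y"
      by (intro tendsto_le[OF trivial_limit_sequentially tendsto_const lim]) auto
  qed
  then show "p \<in> subdiff_set S f K" using l(1) unfolding subdiff_set_def by blast
qed

lemma subdiff_set_bounded:
  fixes f :: "'a::euclidean_space \<Rightarrow> real"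
  assumes K: "compact K" "K \<subseteq> S" and oS: "open S" and cont: "continuous_on S f"
  shows "bounded (subdiff_set S f K)"
proof -
  obtain e where e: "e > 0" "(\<Union>x\<in>K. cball x e) \<subseteq> S"
    using compact_subset_open_imp_cball_epsilon_subset[OF K(1) oS K(2)] by blast
  define C where "C = {x + y | x y. x \<in> K \<and> y \<in> cball 0 e}"
  have cC: "compact C" unfolding C_def by (rule compact_sums[OF K(1)]) simp
  have CS: "C \<subseteq> S"
  proof
    fix z assume "z \<in> C"
    then obtain x y where "z = x + y" "x \<in> K" "y \<in> cball 0 e" unfolding C_def by blast
    then have "z \<in> cball x e" by (simp add: dist_norm)
    then show "z \<in> S" using e \<open>x \<in> K\<close> by blast
  qed
  have "compact (f ` C)" by (rule compact_continuous_image[OF continuous_on_subset[OF cont CS] cC])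
  then obtain M where M: "\<And>z. z \<in> C \<Longrightarrow> norm (f z) \<le> M"
    using compact_imp_bounded bounded_iff by (metis imageI)
  have "subdiff_set S f K \<subseteq> cball 0 (2 * M / e)"
  proof
    fix p assume "p \<in> subdiff_set S f K"
    then obtain x where x: "x \<in> K" "p \<in> subdiff S f x" unfolding subdiff_set_def by blast
    show "p \<in> cball 0 (2 * M / e)"
    proof (cases "p = 0")
      case True
      have "x \<in> C" unfolding C_def using x e by force
      then have "0 \<le> M" using M[of x] by (meson norm_ge_zero order_trans)
      then show ?thesis using True e by simp
    next
      case False
      define y where "y = x + (e / norm p) *\<^sub>R p"
      have yC: "y \<in> C" unfolding C_def y_def using x e False by force
      have xC: "x \<in> C" unfolding C_def using x e by force
      have "f x + p \<bullet> (y - x) \<le> f y" using x yC CS unfolding subdiff_def by blast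
      moreover have "p \<bullet> (y - x) = e * norm p"
        using False by (simp add: y_def power2_norm_eq_inner[symmetric] power2_eq_square)
      ultimately have "e * norm p \<le> f y - f x" by simp
      also have "\<dots> \<le> 2 * M" using M[OF yC] M[OF xC] by (simp add: abs_le_iff)
      finally have "norm p \<le> 2 * M / e" using e by (simp add: pos_le_divide_eq mult.commute)
      then show ?thesis by simp
    qed
  qed
  then show ?thesis using bounded_cball bounded_subset by blast
qed



lemma meas_part:
  fixes A B C :: "'a::euclidean_space set"
  assumes li: "locally_integrable R" and Rpos: "\<And>p. R p > 0" and C: "compact C"
    and B: "closed B" "B \<subseteq> C" and e: "e > 0" and U: "ball c e \<subseteq> C"
    and disj: "ball c e \<inter> B = {}" and sub: "B \<union> ball c e \<subseteq> A"
  shows "(\<integral>\<^sup>+ p. ennreal (R p) * indicator B p \<partial>lebesgue)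
       < (\<integral>\<^sup>+ p. ennreal (R p) * indicator A p \<partial>lebesgue)"
proof -
  have "R integrable_on C" using li C unfolding locally_integrable_def by blast
  then have "R absolutely_integrable_on C"
    by (rule nonnegative_absolutely_integrable_1) (use Rpos less_imp_le in auto)
  then have int: "integrable lebesgue (\<lambda>x. indicator C x *\<^sub>R R x)"
    by (simp add: set_integrable_def)
  then have meC: "(\<lambda>x. indicator C x *\<^sub>R R x) \<in> borel_measurable lebesgue"
    and finC: "(\<integral>\<^sup>+ x. ennreal (norm (indicator C x *\<^sub>R R x)) \<partial>lebesgue) < \<infinity>"
    by (auto simp: integrable_iff_bounded)
  have eqS: "ennreal (R x) * indicator S x = ennreal (indicator C x *\<^sub>R R x) * indicator S x"
    if "S \<subseteq> C" for S x
    using that by (auto simp: indicator_def)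
  have Bs: "B \<in> sets lebesgue" using B by (simp add: borel_closed)
  have Us: "ball c e \<in> sets lebesgue" by simp
  have meB: "(\<lambda>x. ennreal (R x) * indicator B x) \<in> borel_measurable lebesgue"
    apply (subst eqS[OF B(2)])
    using meC Bs by measurable
  have meU: "(\<lambda>x. ennreal (R x) * indicator (ball c e) x) \<in> borel_measurable lebesgue"
    apply (subst eqS[OF U])
    using meC Us by measurable
  have "(\<integral>\<^sup>+ x. ennreal (R x) * indicator B x \<partial>lebesgue)
      \<le> (\<integral>\<^sup>+ x. ennreal (norm (indicator C x *\<^sub>R R x)) \<partial>lebesgue)"
    apply (rule nn_integral_mono)
    using B(2) Rpos less_imp_le by (auto simp: indicator_def)
  with finC have finB: "(\<integral>\<^sup>+ x. ennreal (R x) * indicator B x \<partial>lebesgue) \<noteq> \<infinity>" by auto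
  have Rnz: "\<And>x. \<not> R x \<le> 0" using Rpos by (simp add: not_le)
  have posU: "(\<integral>\<^sup>+ x. ennreal (R x) * indicator (ball c e) x \<partial>lebesgue) > 0"
  proof (rule ccontr)
    assume "\<not> ?thesis"
    then have "(\<integral>\<^sup>+ x. ennreal (R x) * indicator (ball c e) x \<partial>lebesgue) = 0" by simp
    then have "AE x in lebesgue. ennreal (R x) * indicator (ball c e) x = 0"
      using nn_integral_0_iff_AE[OF meU] by simp
    then have "AE x in lebesgue. x \<notin> ball c e"
      by (rule AE_mp) (use Rpos in \<open>auto intro!: AE_I2 simp: indicator_def ennreal_eq_0_iff Rnz\<close>)
    then have "emeasure lebesgue (ball c e) = 0"
      using AE_iff_measurable[OF Us, of "\<lambda>x. x \<notin> ball c e"] by (auto simp: ball_def)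
    moreover have "measure lborel (ball c e) > 0" using content_ball_pos[OF e] by simp
    ultimately show False by (simp add: measure_def)
  qed
  have "(\<integral>\<^sup>+ x. ennreal (R x) * indicator B x \<partial>lebesgue)
      < (\<integral>\<^sup>+ x. ennreal (R x) * indicator B x \<partial>lebesgue) + (\<integral>\<^sup>+ x. ennreal (R x) * indicator (ball c e) x \<partial>lebesgue)"
    using ennreal_add_left_cancel_less[of _ 0] finB posU by simp
  also have "\<dots> = (\<integral>\<^sup>+ x. ennreal (R x) * indicator B x + ennreal (R x) * indicator (ball c e) x \<partial>lebesgue)"
    by (rule nn_integral_add[symmetric]) (use meB meU in auto)
  also have "\<dots> \<le> (\<integral>\<^sup>+ x. ennreal (R x) * indicator A x \<partial>lebesgue)"
    apply (rule nn_integral_mono)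
    using sub disj by (auto simp: indicator_def)
  finally show ?thesis .
qed




theorem lemma2p3:
  fixes \<Omega> Q :: "'a::euclidean_space set"
    and R z1 z2 :: "'a \<Rightarrow> real"
  assumes "open \<Omega>" "convex \<Omega>" "bounded \<Omega>"
    and "locally_integrable R" "\<And>p. R p > 0"
    and "convex_on \<Omega> z1" "convex_on \<Omega> z2"
    and "open Q" "Q \<subseteq> \<Omega>" "closure Q \<subseteq> \<Omega>"
    and "\<And>x. x \<in> Q \<Longrightarrow> z1 x < z2 x"
    and "\<And>x. x \<in> frontier Q \<Longrightarrow> z1 x = z2 x"
    and "\<And>xQ. xQ \<in> frontier (closure Q) \<Longrightarrow>
           \<exists>r>0. cball xQ r \<subseteq> \<Omega> \<and> (\<forall>y \<in> ball xQ r - closure Q. z1 y \<ge> z2 y)"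
    and "\<exists>x0 \<in> frontier (closure Q). \<exists>g.
           (z2 has_derivative (\<lambda>h. g \<bullet> h)) (at x0) \<and> g \<notin> subdiff \<Omega> z1 x0"
  shows "(\<integral>\<^sup>+ p. ennreal (R p) * indicator (subdiff_set \<Omega> z1 (closure Q)) p \<partial>lebesgue)
       > (\<integral>\<^sup>+ p. ennreal (R p) * indicator (subdiff_set \<Omega> z2 (closure Q)) p \<partial>lebesgue)"
proof -
  note oO = assms(1) and cO = assms(2) and cz1 = assms(6) and cz2 = assms(7)
  note cQO = assms(10)
  from assms(14) obtain x0 g where x0: "x0 \<in> frontier (closure Q)"
    and dz2: "(z2 has_derivative (\<lambda>h. g \<bullet> h)) (at x0)" and gn: "g \<notin> subdiff \<Omega> z1 x0"
    by blast
  have fr: "frontier (closure Q) \<subseteq> frontier Q"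
    using interior_mono[OF closure_subset[of Q]] by (auto simp: frontier_def)
  have x0Q: "x0 \<in> closure Q" using x0 by (auto simp: frontier_def)
  have x0O: "x0 \<in> \<Omega>" using x0Q cQO by blast
  have eq0: "z1 x0 = z2 x0" using assms(12) fr x0 by blast
  obtain r where r: "r > 0" "cball x0 r \<subseteq> \<Omega>" "\<forall>y\<in>ball x0 r - closure Q. z2 y \<le> z1 y"
    using assms(13)[OF x0] by blast
  have g2: "g \<in> subdiff \<Omega> z2 x0" by (rule tangent_subdiff[OF cz2 cO x0O dz2])
  then have l2: "\<And>y. y \<in> \<Omega> \<Longrightarrow> z2 x0 + g \<bullet> (y - x0) \<le> z2 y" by (auto simp: subdiff_def)
  have le12: "z1 y \<le> z2 y" if "y \<in> closure Q" for y
    using that assms(11,12) closure_Un_frontier[of Q] by (force intro: less_imp_le)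
  have c1: "continuous_on \<Omega> z1" by (rule convex_on_continuous[OF oO cz1])
  have c2: "continuous_on \<Omega> z2" by (rule convex_on_continuous[OF oO cz2])
  have bQ: "bounded (closure Q)" using bounded_subset[OF assms(3) cQO] .
  have cQ: "compact (closure Q)" using bQ by (simp add: compact_eq_bounded_closed)
  have loc_to_A: "p \<in> subdiff_set \<Omega> z1 (closure Q)"
    if xm: "xm \<in> closure Q" and mn: "\<forall>y\<in>closure Q. z1 xm - p \<bullet> xm \<le> z1 y - p \<bullet> y"
      and out: "xm \<in> frontier (closure Q) \<Longrightarrow>
                 \<exists>e>0. \<forall>y\<in>ball xm e - closure Q. z1 xm - p \<bullet> xm \<le> z1 y - p \<bullet> y"
    for xm p
  proof -
    have xmO: "xm \<in> \<Omega>" using xm cQO by blast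
    obtain e where e: "e > 0" "\<forall>y\<in>ball xm e. z1 xm - p \<bullet> xm \<le> z1 y - p \<bullet> y"
    proof (cases "xm \<in> interior (closure Q)")
      case True
      then obtain e where "e > 0" "ball xm e \<subseteq> closure Q"
        using open_contains_ball open_interior interior_subset by (metis subset_trans)
      then show ?thesis using that mn by blast
    next
      case False
      then have "xm \<in> frontier (closure Q)" using xm by (auto simp: frontier_def)
      then obtain e where "e > 0" "\<forall>y\<in>ball xm e - closure Q. z1 xm - p \<bullet> xm \<le> z1 y - p \<bullet> y"
        using out by blast
      then show ?thesis using that mn by blast
    qed
    have "p \<in> subdiff \<Omega> z1 xm"
    proof (rule localmin_subdiff[OF cz1 cO xmO e(1)])
      fix y assume "y \<in> \<Omega>" "dist y xm < e"
      then have "y \<in> ball xm e" by (simp add: dist_commute)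
      then have "z1 xm - p \<bullet> xm \<le> z1 y - p \<bullet> y" using e by blast
      then show "z1 xm + p \<bullet> (y - xm) \<le> z1 y" by (simp add: inner_diff_right)
    qed
    then show ?thesis using xm by (auto simp: subdiff_set_def)
  qed
  have minex: "\<exists>xm\<in>closure Q. \<forall>y\<in>closure Q. z1 xm - p \<bullet> xm \<le> z1 y - p \<bullet> y" for p
  proof -
    have "continuous_on (closure Q) (\<lambda>y. z1 y - p \<bullet> y)"
      by (intro continuous_on_diff continuous_on_subset[OF c1 cQO] continuous_intros)
    moreover have ne: "closure Q \<noteq> {}" using x0Q by auto
    ultimately show ?thesis using continuous_attains_inf[OF cQ ne] by simp
  qed
  have BA: "subdiff_set \<Omega> z2 (closure Q) \<subseteq> subdiff_set \<Omega> z1 (closure Q)"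
  proof
    fix p assume "p \<in> subdiff_set \<Omega> z2 (closure Q)"
    then obtain x where x: "x \<in> closure Q" "p \<in> subdiff \<Omega> z2 x" by (auto simp: subdiff_set_def)
    obtain xm where xm: "xm \<in> closure Q" "\<forall>y\<in>closure Q. z1 xm - p \<bullet> xm \<le> z1 y - p \<bullet> y"
      using minex by blast
    have v: "z1 xm - p \<bullet> xm \<le> z2 x - p \<bullet> x" using xm(2) x(1) le12[OF x(1)] by force
    show "p \<in> subdiff_set \<Omega> z1 (closure Q)"
    proof (rule loc_to_A[OF xm])
      assume "xm \<in> frontier (closure Q)"
      from assms(13)[OF this] obtain e where e: "e > 0" "cball xm e \<subseteq> \<Omega>"
        "\<forall>y\<in>ball xm e - closure Q. z2 y \<le> z1 y" by blast
      have "\<forall>y\<in>ball xm e - closure Q. z1 xm - p \<bullet> xm \<le> z1 y - p \<bullet> y"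
      proof
        fix y assume y: "y \<in> ball xm e - closure Q"
        then have yO: "y \<in> \<Omega>" using e(2) by auto
        have "z2 x + p \<bullet> (y - x) \<le> z2 y" using x(2) yO by (auto simp: subdiff_def)
        moreover have "z2 y \<le> z1 y" using e(3) y by blast
        ultimately show "z1 xm - p \<bullet> xm \<le> z1 y - p \<bullet> y"
          using v by (simp add: inner_diff_right)
      qed
      then show "\<exists>e>0. \<forall>y\<in>ball xm e - closure Q. z1 xm - p \<bullet> xm \<le> z1 y - p \<bullet> y"
        using e(1) by blast
    qed
  qed
  obtain w where w: "w \<in> closure Q" "z1 w < z2 x0 + g \<bullet> (w - x0)"
  proof -
    from gn obtain y where y: "y \<in> \<Omega>" "z1 y < z1 x0 + g \<bullet> (y - x0)"
      by (auto simp: subdiff_def not_le)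
    have yx: "y \<noteq> x0" using y by auto
    then have ny: "norm (y - x0) > 0" by simp
    define u where "u = min 1 (r / (2 * norm (y - x0)))"
    have u: "0 < u" "u \<le> 1" using r(1) ny by (auto simp: u_def)
    define w where "w = (1 - u) *\<^sub>R x0 + u *\<^sub>R y"
    have wO: "w \<in> \<Omega>" unfolding w_def using convexD[OF cO x0O y(1), of "1 - u" u] u by simp
    have "z1 w \<le> (1 - u) * z1 x0 + u * z1 y"
      unfolding w_def using u by (intro convex_onD[OF cz1]) (use x0O y in auto)
    moreover have wx: "w - x0 = u *\<^sub>R (y - x0)" by (simp add: w_def algebra_simps)
    moreover have ulr: "u * z1 y < u * (z1 x0 + g \<bullet> (y - x0))" using u y(2) by simp
    moreover have gw: "g \<bullet> (w - x0) = u * (g \<bullet> (y - x0))" using wx by simp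
    moreover have "(1 - u) * z1 x0 + u * z1 y < z1 x0 + u * (g \<bullet> (y - x0))"
      using ulr by (simp add: algebra_simps)
    ultimately have lt: "z1 w < z2 x0 + g \<bullet> (w - x0)" using eq0 by linarith
    have "dist x0 w = u * norm (y - x0)" using wx u by (simp add: dist_norm norm_minus_commute)
    also have "\<dots> \<le> r / (2 * norm (y - x0)) * norm (y - x0)"
      using ny by (intro mult_right_mono) (auto simp: u_def)
    also have "\<dots> = r / 2" using ny by simp
    finally have wb: "w \<in> ball x0 r" using r(1) by simp
    have "w \<in> closure Q"
    proof (rule ccontr)
      assume "w \<notin> closure Q"
      then have "z2 w \<le> z1 w" using r(3) wb by blast
      moreover have "z2 x0 + g \<bullet> (w - x0) \<le> z2 w" using l2[OF wO] .
      ultimately show False using lt by simp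
    qed
    then show ?thesis using that lt by blast
  qed
  define m0 where "m0 = z2 x0 + g \<bullet> (w - x0) - z1 w"
  have m0: "m0 > 0" using w(2) by (simp add: m0_def)
  obtain B0 where B0: "B0 > 0" "\<And>y. y \<in> closure Q \<Longrightarrow> norm y \<le> B0"
    using bQ bounded_pos by blast
  define D where "D = B0 + norm x0"
  have D: "D > 0" "\<And>y. y \<in> closure Q \<Longrightarrow> norm (y - x0) \<le> D"
  proof -
    show "D > 0" using B0 by (simp add: D_def add_pos_nonneg)
    fix y assume "y \<in> closure Q"
    then have "norm y \<le> B0" using B0 by blast
    then show "norm (y - x0) \<le> D" using norm_triangle_ineq4[of y x0] by (simp add: D_def)
  qed
  define \<delta> where "\<delta> = m0 / (4 * D)"
  have \<delta>: "\<delta> > 0" using m0 D by (simp add: \<delta>_def)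
  have \<delta>D: "\<delta> * (2 * D) = m0 / 2" using D by (simp add: \<delta>_def)
  have ballA: "p \<in> subdiff_set \<Omega> z1 (closure Q)" if p: "norm (p - g) < \<delta>" for p
  proof -
    obtain xm where xm: "xm \<in> closure Q" "\<forall>y\<in>closure Q. z1 xm - p \<bullet> xm \<le> z1 y - p \<bullet> y"
      using minex by blast
    have "xm \<in> Q"
    proof (rule ccontr)
      assume "xm \<notin> Q"
      then have "xm \<in> frontier Q" using xm(1) closure_Un_frontier[of Q] by blast
      then have "z1 xm = z2 xm" using assms(12) by blast
      also have "z2 x0 + g \<bullet> (xm - x0) \<le> z2 xm" using l2 xm(1) cQO by blast
      finally have a: "z2 x0 + g \<bullet> (xm - x0) \<le> z1 xm" .
      have b: "z1 xm - p \<bullet> xm \<le> z1 w - p \<bullet> w" using xm(2) w(1) by blast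
      have "(g - p) \<bullet> (xm - w) \<le> - m0"
        using a b unfolding m0_def by (simp add: inner_diff_left inner_diff_right)
      moreover have "\<bar>(g - p) \<bullet> (xm - w)\<bar> \<le> norm (g - p) * norm (xm - w)"
        by (rule Cauchy_Schwarz_ineq2)
      moreover have "norm (xm - w) \<le> 2 * D"
      proof -
        have "norm (xm - w) \<le> norm (xm - x0) + norm (w - x0)"
          using norm_triangle_ineq4[of "xm - x0" "w - x0"] by simp
        then show ?thesis using D(2)[OF xm(1)] D(2)[OF w(1)] by simp
      qed
      moreover have "norm (g - p) * norm (xm - w) \<le> \<delta> * (2 * D)"
        using p \<delta> \<open>norm (xm - w) \<le> 2 * D\<close> by (intro mult_mono) (auto simp: norm_minus_commute)
      ultimately show False using \<delta>D m0 by linarith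
    qed
    then have "xm \<notin> frontier (closure Q)" using fr assms(8) by (auto simp: frontier_def interior_open)
    then show ?thesis using loc_to_A[OF xm] by blast
  qed
  obtain q where q: "q \<in> subdiff \<Omega> z1 x0" using subdiff_nonempty[OF cz1 cO oO x0O] by blast
  define q' where "q' = q - g"
  have q'0: "q' \<noteq> 0" using q gn by (auto simp: q'_def)
  then have nq: "norm q' > 0" by simp
  define t where "t = min (1/2) (\<delta> / (2 * norm q'))"
  have t: "0 < t" "t < 1" using \<delta> nq by (auto simp: t_def)
  have tn: "t * norm q' \<le> \<delta> / 2"
  proof -
    have "t * norm q' \<le> \<delta> / (2 * norm q') * norm q'" using nq by (intro mult_right_mono) (auto simp: t_def)
    then show ?thesis using nq by simp
  qed
  define ps where "ps = g + t *\<^sub>R q'"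
  have psg: "norm (ps - g) \<le> \<delta> / 2" using tn t by (simp add: ps_def)
  have psB: "ps \<notin> subdiff_set \<Omega> z2 (closure Q)"
  proof
    assume "ps \<in> subdiff_set \<Omega> z2 (closure Q)"
    then obtain x where x: "x \<in> closure Q" "ps \<in> subdiff \<Omega> z2 x" by (auto simp: subdiff_set_def)
    have xO: "x \<in> \<Omega>" using x cQO by blast
    have i: "z2 x + ps \<bullet> (x0 - x) \<le> z2 x0" using x(2) x0O by (auto simp: subdiff_def)
    have ii: "z2 x0 + g \<bullet> (x - x0) \<le> z2 x" using l2[OF xO] .
    have iii: "z1 x \<le> z2 x" using le12[OF x(1)] .
    have iv: "z1 x0 + q \<bullet> (x - x0) \<le> z1 x" using q xO by (auto simp: subdiff_def)
    define a where "a = q' \<bullet> (x - x0)"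
    define b where "b = g \<bullet> (x - x0)"
    have ps1: "ps \<bullet> (x0 - x) = - b - t * a"
      by (simp add: ps_def a_def b_def inner_add_left inner_diff_right algebra_simps)
    have q1: "q \<bullet> (x - x0) = a + b" by (simp add: q'_def a_def b_def inner_diff_left)
    have ta: "0 \<le> t * a" and up: "z2 x \<le> z2 x0 + b + t * a" using i ii ps1 b_def by linarith+
    have "(1 - t) * a \<le> 0" using i iii iv ps1 q1 eq0 by (simp add: algebra_simps)
    then have "a \<le> 0" using t by (simp add: mult_le_0_iff)
    moreover have "0 \<le> a" using ta t by (simp add: zero_le_mult_iff)
    ultimately have a0: "a = 0" by simp
    have z2x: "z2 x = z2 x0 + b" using up ii a0 b_def by simp
    have "z2 y - z2 x0 - g \<bullet> (y - x0) \<ge> t * (q' \<bullet> (y - x0))" if y: "y \<in> \<Omega>" for y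
    proof -
      have "z2 x + ps \<bullet> (y - x) \<le> z2 y" using x(2) y by (auto simp: subdiff_def)
      moreover have "ps \<bullet> (y - x) = g \<bullet> (y - x0) - b + t * (q' \<bullet> (y - x0)) - t * a"
        by (simp add: ps_def a_def b_def inner_add_left inner_diff_right algebra_simps)
      ultimately show ?thesis using z2x a0 by simp
    qed
    then show False using deriv_contra[OF dz2 oO x0O t(1) q'0] by blast
  qed
  have Bc: "closed (subdiff_set \<Omega> z2 (closure Q))"
    by (rule subdiff_set_closed[OF cQ cQO oO c2])
  obtain \<epsilon> where \<epsilon>: "\<epsilon> > 0" "ball ps \<epsilon> \<subseteq> - subdiff_set \<Omega> z2 (closure Q)"
    using Bc psB open_contains_ball[of "- subdiff_set \<Omega> z2 (closure Q)"] by (auto simp: open_Compl)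
  define \<epsilon>' where "\<epsilon>' = min \<epsilon> (\<delta> / 2)"
  have \<epsilon>': "\<epsilon>' > 0" using \<epsilon> \<delta> by (simp add: \<epsilon>'_def)
  have disj: "ball ps \<epsilon>' \<inter> subdiff_set \<Omega> z2 (closure Q) = {}" using \<epsilon> by (auto simp: \<epsilon>'_def)
  have UA: "ball ps \<epsilon>' \<subseteq> subdiff_set \<Omega> z1 (closure Q)"
  proof
    fix p assume "p \<in> ball ps \<epsilon>'"
    then have "norm (p - ps) < \<delta> / 2" by (simp add: \<epsilon>'_def dist_norm norm_minus_commute)
    then have "norm (p - g) < \<delta>" using psg norm_triangle_ineq[of "p - ps" "ps - g"] by simp
    then show "p \<in> subdiff_set \<Omega> z1 (closure Q)" by (rule ballA)
  qed
  have bB: "bounded (subdiff_set \<Omega> z2 (closure Q))"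
    by (rule subdiff_set_bounded[OF cQ cQO oO c2])
  then have "bounded (subdiff_set \<Omega> z2 (closure Q) \<union> ball ps \<epsilon>')" by simp
  then obtain c0 M where CM: "subdiff_set \<Omega> z2 (closure Q) \<union> ball ps \<epsilon>' \<subseteq> cball c0 M"
    using bounded_subset_cball by blast
  show ?thesis
    using meas_part[OF assms(4) assms(5) compact_cball Bc _ \<epsilon>' _ disj] CM BA UA by blast
qed


end
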